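(* Let $\mu = (\mu_1,\mu_2,\ldots,\mu_n)$, $k = \sum_{i=1}^n \mu_i$, and $n = \sum_{i=1}^n i\mu_i$. Let $d$ be a positive integer such that $d \mid (n+2)$, and let $\zeta_d$ be a primitive $d$-th root of unity. \begin{enumerate} \item If there is one index $j$ such that $\mu_j \equiv 1 \pmod{d}$ and $\mu_i \equiv 0 \pmod{d}$ for all $i \neq j$, then \[ a_\mu(\zeta_d) = \binom{\frac{n+2}{d} + \frac{k-1}{d} - 1}{\frac{k-1}{d}} \binom{\frac{k-1}{d}}{\lfloor \frac{\mu_1}{d}\rfloor, \lfloor \frac{\mu_2}{d}\rfloor, \ldots, \lfloor \frac{\mu_n}{d}\rfloor} . \] \item If $d = 2$ and all $\mu_i$ are even, then \[ a_\mu(\zeta_{2}) = a_\mu(-1) = \binom{\frac{n+k}{2}}{\frac{k}{2}}\binom{\frac{k}{2}}{\frac{\mu_1}{2},\frac{\mu_2}{2},\ldots,\frac{\mu_n}{2}}. \] \item If $\mu$ satisfies neither (a) there is exactly one index $j$ with $\mu_j \equiv 1 \pmod{d}$ and $\mu_i \equiv 0 \pmod{d}$ for all $i \neq j$, nor (b) $d = 2$ and all $\mu_i$ are even, then $a_\mu(\zeta_d) = 0$. \end{enumerate}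
   Context: $a_\mu(q) = \frac{1}{[n+1]_q} \left[\begin{smallmatrix} n+k \\ k\end{smallmatrix}\right]_q \left[\begin{smallmatrix} k \\ \mu_1,\mu_2,\ldots,\mu_n\end{smallmatrix}\right]_q$, the naive $q$-analogue of $a_\mu = \frac{1}{n+1}\binom{n+k}{k}\binom{k}{\mu_1,\ldots,\mu_n}$, where $[\cdot]_q$ denotes $q$-integers and the bracketed expressions are $q$-binomial and $q$-multinomial coefficients. *)

theory Defs
  imports Complex_Main "HOL-Computational_Algebra.Polynomial"
begin

definition qint :: "nat \<Rightarrow> complex poly" where
  "qint m = (\<Sum>i<m. monom 1 i)"

definition qfact :: "nat \<Rightarrow> complex poly" where
  "qfact m = (\<Prod>i=1..m. qint i)"

(* q-binomial coefficient [a choose b]_q = [a]_q! / ([b]_q! [a-b]_q!)  (exact polynomial division) *)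
definition qbinom :: "nat \<Rightarrow> nat \<Rightarrow> complex poly" where
  "qbinom a b = qfact a div (qfact b * qfact (a - b))"

definition qmultinom :: "nat \<Rightarrow> nat \<Rightarrow> (nat \<Rightarrow> nat) \<Rightarrow> complex poly" where
  "qmultinom m n mu = qfact m div (\<Prod>i=1..n. qfact (mu i))"

definition kval :: "nat \<Rightarrow> (nat \<Rightarrow> nat) \<Rightarrow> nat" where
  "kval n mu = (\<Sum>i=1..n. mu i)"

definition a_mu :: "nat \<Rightarrow> (nat \<Rightarrow> nat) \<Rightarrow> complex \<Rightarrow> complex" where
  "a_mu n mu q =
     poly (qbinom (n + kval n mu) (kval n mu) * qmultinom (kval n mu) n mu) q
       / poly (qint (n + 1)) q"

definition multinom :: "nat \<Rightarrow> nat \<Rightarrow> (nat \<Rightarrow> nat) \<Rightarrow> complex" where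
  "multinom m n a = of_nat (fact m) / of_nat (\<Prod>i=1..n. fact (a i))"

definition primitive_root :: "nat \<Rightarrow> complex \<Rightarrow> bool" where
  "primitive_root d z \<longleftrightarrow> z ^ d = 1 \<and> (\<forall>m. 0 < m \<and> m < d \<longrightarrow> z ^ m \<noteq> 1)"

end

theory Submission imports Defs begin

lemma qfact_0[simp]: "qfact 0 = 1" by (simp add: qfact_def)
lemma qfact_Suc: "qfact (Suc m) = qfact m * qint (Suc m)"
  by (simp add: qfact_def)
lemma qint_0[simp]: "qint 0 = 0" by (simp add: qint_def)
lemma qint_1[simp]: "qint 1 = 1" by (simp add: qint_def)
lemma qint_Suc: "qint (Suc m) = qint m + monom 1 m" by (simp add: qint_def)
lemma qint_add: "qint (a + b) = qint a + monom 1 a * qint b"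
  by (induction b) (simp_all add: qint_Suc algebra_simps mult_monom)
lemma poly_qint: "poly (qint m) z = (\<Sum>i<m. z ^ i)"
  by (simp add: qint_def poly_sum poly_monom)
lemma qint_mult: "qint (d * s) = qint d * (\<Sum>j<s. monom 1 (d * j))"
proof (induction s)
  case 0 then show ?case by simp
next
  case (Suc s)
  have "qint (d * Suc s) = qint (d * s) + monom 1 (d * s) * qint d"
  proof -
    have e: "d * Suc s = d * s + d" by simp
    show ?thesis unfolding e by (rule qint_add)
  qed
  also have "\<dots> = qint d * (\<Sum>j<s. monom 1 (d * j)) + qint d * monom 1 (d * s)"
    using Suc by (simp only: mult.commute)
  also have "\<dots> = qint d * (\<Sum>j<Suc s. monom 1 (d * j))"
    by (simp only: sum.lessThan_Suc distrib_left)
  finally show ?case .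
qed

lemma poly_qint_geo: "(1 - z) * poly (qint m) z = 1 - z ^ m"
proof (induction m)
  case (Suc m)
  have "(1 - z) * poly (qint (Suc m)) z = (1 - z) * poly (qint m) z + (1 - z) * z ^ m"
    by (simp add: poly_qint distrib_left)
  also have "\<dots> = 1 - z ^ m + (1 - z) * z ^ m" using Suc by simp
  also have "\<dots> = 1 - z ^ Suc m" by (simp add: algebra_simps)
  finally show ?case .
qed simp

lemma prim_pow_mod: "primitive_root d z \<Longrightarrow> z ^ m = z ^ (m mod d)"
proof -
  assume "primitive_root d z"
  then have zd: "z ^ d = 1" unfolding primitive_root_def by simp
  have "z ^ m = z ^ (d * (m div d) + m mod d)" by simp
  also have "\<dots> = (z ^ d) ^ (m div d) * z ^ (m mod d)" by (simp only: power_add power_mult)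
  also have "\<dots> = z ^ (m mod d)" using zd by simp
  finally show ?thesis .
qed

lemma prim_ne1: "primitive_root d z \<Longrightarrow> d \<ge> 2 \<Longrightarrow> z \<noteq> 1"
proof
  assume a: "primitive_root d z" "d \<ge> 2" "z = 1"
  have "(0::nat) < 1 \<and> (1::nat) < d" using a(2) by simp
  then have "z ^ 1 \<noteq> 1" using a(1) unfolding primitive_root_def by blast
  then show False using a(3) by simp
qed

definition redv :: "nat \<Rightarrow> complex \<Rightarrow> nat \<Rightarrow> complex" where
  "redv d z m = of_nat (fact (m div d)) * poly (qfact (d - 1)) z ^ (m div d) * poly (qfact (m mod d)) z"

lemma poly_qint_mod:
  assumes hz: "primitive_root d z" and "d \<ge> 2"
  shows "poly (qint m) z = poly (qint (m mod d)) z"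
proof -
  have z1: "1 - z \<noteq> 0" using prim_ne1[OF hz \<open>d \<ge> 2\<close>] by simp
  have "(1 - z) * poly (qint m) z = (1 - z) * poly (qint (m mod d)) z"
    unfolding poly_qint_geo using prim_pow_mod[OF hz, of m] by simp
  then show ?thesis using z1 by simp
qed

lemma poly_sum_monom_d:
  assumes hz: "primitive_root d z"
  shows "poly (\<Sum>j<c. monom 1 (d * j)) z = of_nat c"
proof -
  have zd: "z ^ d = 1" using hz unfolding primitive_root_def by simp
  have "poly (\<Sum>j<c. monom 1 (d * j)) z = (\<Sum>j<c. (z ^ d) ^ j)"
    by (simp add: poly_sum poly_monom power_mult)
  also have "\<dots> = of_nat c" using zd by simp
  finally show ?thesis .
qed

lemma decomp:
  assumes hz: "primitive_root d z" and hd: "d > 0"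
  shows "\<exists>R. qfact m = qint d ^ (m div d) * R \<and> poly R z = redv d z m"
proof (induction m)
  case 0
  show ?case by (rule exI[of _ 1]) (simp add: redv_def)
next
  case (Suc m)
  then obtain R where R: "qfact m = qint d ^ (m div d) * R" "poly R z = redv d z m" by blast
  define t where "t = m div d"
  define C where "C = poly (qfact (d - 1)) z"
  show ?case
  proof (cases "Suc m mod d = 0")
    case True
    have m1: "Suc (m mod d) = d"
      using True mod_Suc[of m d] by (auto split: if_splits)
    have mm: "m mod d = d - 1" using m1 by simp
    have sd: "Suc m div d = Suc t" using True div_Suc[of m d] t_def by simp
    have sm: "Suc m = d * Suc t"
    proof -
      have "Suc m = d * (Suc m div d) + Suc m mod d" by (rule div_mult_mod_eq[symmetric, of "Suc m" d, simplified mult.commute])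
      also have "\<dots> = d * Suc t" by (simp only: True sd add_0_right)
      finally show ?thesis .
    qed
    define S where "S = (\<Sum>j<Suc t. monom 1 (d * j) :: complex poly)"
    have qS: "qint (Suc m) = qint d * S" unfolding S_def sm by (rule qint_mult)
    have pS: "poly S z = of_nat (Suc t)" unfolding S_def by (rule poly_sum_monom_d[OF hz])
    have A: "qfact (Suc m) = qint d ^ Suc t * (R * S)"
      by (simp add: qfact_Suc R(1) qS t_def[symmetric] mult_ac)
    have B: "poly (R * S) z = redv d z (Suc m)"
    proof -
      have "poly (R * S) z = of_nat (fact t) * C ^ t * C * of_nat (Suc t)"
        using R(2) pS by (simp add: redv_def t_def C_def mm)
      also have "\<dots> = of_nat (fact (Suc t)) * C ^ Suc t"
        by (simp add: fact_Suc algebra_simps)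
      also have "\<dots> = redv d z (Suc m)"
        using True sd by (simp add: redv_def C_def)
      finally show ?thesis .
    qed
    show ?thesis by (rule exI[of _ "R * S"]) (simp only: A B sd)
  next
    case False
    have d2: "d \<ge> 2" using False hd by (cases "d = 1") auto
    have sd: "Suc m div d = m div d" using False div_Suc[of m d] by simp
    have smod: "Suc m mod d = Suc (m mod d)" using False mod_Suc[of m d] by (auto split: if_splits)
    have A: "qfact (Suc m) = qint d ^ (Suc m div d) * (R * qint (Suc m))"
      by (simp only: sd qfact_Suc R(1) mult_ac)
    have B: "poly (R * qint (Suc m)) z = redv d z (Suc m)"
    proof -
      have "poly (qint (Suc m)) z = poly (qint (Suc (m mod d))) z"
        using poly_qint_mod[OF hz d2, of "Suc m"] smod by simp
      then show ?thesis using R(2) sd smod by (simp add: redv_def qfact_Suc)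
    qed
    show ?thesis by (rule exI[of _ "R * qint (Suc m)"]) (simp only: A B)
  qed
qed

fun gb :: "nat \<Rightarrow> nat \<Rightarrow> complex poly" where
  "gb a 0 = 1"
| "gb 0 (Suc b) = 0"
| "gb (Suc a) (Suc b) = gb a b + monom 1 (Suc b) * gb a (Suc b)"

lemma gb_zero: "a < b \<Longrightarrow> gb a b = 0"
proof (induction a arbitrary: b)
  case 0 then show ?case by (cases b) auto
next
  case (Suc a)
  then obtain b' where b: "b = Suc b'" by (cases b) auto
  then show ?case using Suc by simp
qed

lemma gb_fact: "b \<le> a \<Longrightarrow> gb a b * qfact b * qfact (a - b) = qfact a"
proof (induction a arbitrary: b)
  case 0 then show ?case by simp
next
  case (Suc a)
  show ?case
  proof (cases b)
    case 0 then show ?thesis by simp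
  next
    case (Suc b')
    then have ba: "b' \<le> a" using Suc.prems by simp
    have T1: "gb a b' * qfact (Suc b') * qfact (a - b') = qfact a * qint (Suc b')"
      using Suc.IH[OF ba] by (simp add: qfact_Suc mult_ac)
    have T2: "monom 1 (Suc b') * gb a (Suc b') * qfact (Suc b') * qfact (a - b')
        = monom 1 (Suc b') * qfact a * qint (a - b')"
    proof (cases "b' = a")
      case True then show ?thesis by (simp add: gb_zero)
    next
      case False
      then have ba2: "Suc b' \<le> a" using ba by simp
      have e: "a - b' = Suc (a - Suc b')" using ba2 by simp
      have H: "gb a (Suc b') * qfact (Suc b') * qfact (a - Suc b') = qfact a"
        using Suc.IH[OF ba2] .
      have "monom 1 (Suc b') * gb a (Suc b') * qfact (Suc b') * qfact (a - b')
         = monom 1 (Suc b') * (gb a (Suc b') * qfact (Suc b') * qfact (a - Suc b')) * qint (a - b')"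
        unfolding e qfact_Suc[of "a - Suc b'"] by (simp only: mult_ac)
      then show ?thesis by (simp only: H)
    qed
    have "gb (Suc a) b * qfact b * qfact (Suc a - b)
        = gb a b' * qfact (Suc b') * qfact (a - b') + monom 1 (Suc b') * gb a (Suc b') * qfact (Suc b') * qfact (a - b')"
      using Suc by (simp add: distrib_right)
    also have "\<dots> = qfact a * (qint (Suc b') + monom 1 (Suc b') * qint (a - b'))"
      unfolding T1 T2 by (simp add: distrib_left mult_ac)
    also have "qint (Suc b') + monom 1 (Suc b') * qint (a - b') = qint (Suc b' + (a - b'))"
      by (rule qint_add[symmetric])
    also have "Suc b' + (a - b') = Suc a" using ba by simp
    finally show ?thesis by (simp add: qfact_Suc)
  qed
qed

lemma qbinom_mult: "b \<le> a \<Longrightarrow> qbinom a b * (qfact b * qfact (a - b)) = qfact a"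
proof -
  assume ba: "b \<le> a"
  have "qfact b * qfact (a - b) dvd qfact a"
  proof
    show "qfact a = qfact b * qfact (a - b) * gb a b"
      using gb_fact[OF ba] by (simp only: mult_ac)
  qed
  then show ?thesis unfolding qbinom_def by (rule dvd_div_mult_self)
qed

lemma qfact_prod_dvd: "finite A \<Longrightarrow> (\<Prod>i\<in>A. qfact (f i)) dvd qfact (\<Sum>i\<in>A. f i)"
proof (induction A rule: finite_induct)
  case empty then show ?case by simp
next
  case (insert x A)
  have A1: "qfact (f x) * qfact (sum f A) dvd qfact (f x + sum f A)"
  proof
    have "gb (f x + sum f A) (f x) * qfact (f x) * qfact (f x + sum f A - f x) = qfact (f x + sum f A)"
      by (rule gb_fact) simp
    then show "qfact (f x + sum f A) = qfact (f x) * qfact (sum f A) * gb (f x + sum f A) (f x)"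
      by (simp only: mult_ac add_diff_cancel_left')
  qed
  have A2: "qfact (f x) * (\<Prod>i\<in>A. qfact (f i)) dvd qfact (f x) * qfact (sum f A)"
    using insert.IH by (rule mult_dvd_mono[OF dvd_refl])
  show ?case using insert(1,2) dvd_trans[OF A2 A1] by simp
qed

lemma qmultinom_mult: "qmultinom m n mu * (\<Prod>i=1..n. qfact (mu i)) = qfact m"
  if "m = (\<Sum>i=1..n. mu i)"
  unfolding qmultinom_def that by (rule dvd_div_mult_self[OF qfact_prod_dvd]) simp

lemma poly_qfact_nz:
  assumes hz: "primitive_root d z" and "r < d"
  shows "poly (qfact r) z \<noteq> 0"
  using \<open>r < d\<close>
proof (induction r)
  case 0 then show ?case by simp
next
  case (Suc r)
  have "poly (qint (Suc r)) z \<noteq> 0"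
  proof
    assume "poly (qint (Suc r)) z = 0"
    then have "1 - z ^ Suc r = 0" using poly_qint_geo[of z "Suc r"] by simp
    moreover have "z ^ Suc r \<noteq> 1" using hz Suc.prems unfolding primitive_root_def by blast
    ultimately show False by simp
  qed
  then show ?case using Suc by (simp add: qfact_Suc)
qed

lemma redv_nz:
  assumes hz: "primitive_root d z" and hd: "d > 0"
  shows "redv d z m \<noteq> 0"
  unfolding redv_def using poly_qfact_nz[OF hz, of "d - 1"] poly_qfact_nz[OF hz, of "m mod d"] hd
  by simp

lemma qint_nz: "d > 0 \<Longrightarrow> qint d \<noteq> 0"
proof
  assume "d > 0" "qint d = 0"
  then have "poly (qint d) 1 = 0" by simp
  moreover have "poly (qint d) (1::complex) = of_nat d" by (simp add: poly_qint)
  ultimately show False using \<open>d > 0\<close> by simp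
qed

lemma poly_qint_d: "primitive_root d z \<Longrightarrow> d \<ge> 2 \<Longrightarrow> poly (qint d) z = 0"
proof -
  assume hz: "primitive_root d z" and d2: "d \<ge> 2"
  have "(1 - z) * poly (qint d) z = 0" using hz unfolding poly_qint_geo primitive_root_def by simp
  then show ?thesis using prim_ne1[OF hz d2] by simp
qed

lemma eval_quot:
  assumes hz: "primitive_root d z" and hd: "d > 0"
    and PQ: "P * Q = qfact a" and Q: "Q = qint d ^ e * Qr" and Qr: "poly Qr z \<noteq> 0"
    and e: "e \<le> a div d" and alt: "d \<ge> 2 \<or> e = a div d"
  shows "poly P z = (if e = a div d then redv d z a / poly Qr z else 0)"
proof -
  obtain R where R: "qfact a = qint d ^ (a div d) * R" "poly R z = redv d z a"
    using decomp[OF hz hd] by blast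
  have "qint d ^ e * (P * Qr) = qint d ^ e * (qint d ^ (a div d - e) * R)"
    using PQ Q R(1) e by (simp add: mult_ac power_add[symmetric])
  then have "P * Qr = qint d ^ (a div d - e) * R"
    using qint_nz[OF hd] by simp
  then have "poly (P * Qr) z = poly (qint d ^ (a div d - e) * R) z" by simp
  then have ev: "poly P z * poly Qr z = poly (qint d) z ^ (a div d - e) * redv d z a"
    using R(2) by (simp only: poly_mult poly_power)
  show ?thesis
  proof (cases "e = a div d")
    case True then show ?thesis using ev Qr by (simp add: field_simps)
  next
    case False
    then have "d \<ge> 2" "a div d - e > 0" using alt e by auto
    then show ?thesis using ev Qr False poly_qint_d[OF hz] by (simp add: power_0_left)
  qed
qed

lemma sum_eq_one_nat:
  assumes "finite A" "(\<Sum>i\<in>A. f i) = (1::nat)"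
  shows "\<exists>j\<in>A. f j = 1 \<and> (\<forall>i\<in>A. i \<noteq> j \<longrightarrow> f i = 0)"
proof -
  have "\<not> (\<forall>j\<in>A. f j = 0)"
  proof
    assume "\<forall>j\<in>A. f j = 0"
    then have "sum f A = 0" by simp
    then show False using assms(2) by simp
  qed
  then obtain j where j: "j \<in> A" "f j \<noteq> 0" by blast
  have split: "(\<Sum>i\<in>A. f i) = f j + (\<Sum>i\<in>A - {j}. f i)"
    using assms(1) j(1) by (simp add: sum.remove)
  then have fj: "f j = 1" and rest: "(\<Sum>i\<in>A - {j}. f i) = 0" using assms(2) j(2) by auto
  have "\<forall>i\<in>A. i \<noteq> j \<longrightarrow> f i = 0" using rest assms(1) by simp
  then show ?thesis using j(1) fj by blast
qed

lemma nform:
  fixes d n :: nat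
  assumes "d \<ge> 2" "d dvd n + 2"
  shows "n = d * ((n + 2) div d - 1) + (d - 2)"
proof -
  obtain c where c: "n + 2 = d * c" using assms(2) by blast
  then have "c \<noteq> 0" by (metis add_is_0 mult_0_right zero_neq_numeral)
  then obtain c' where c': "c = Suc c'" by (cases c) auto
  have cd: "(n + 2) div d = c" using c assms(1) by simp
  have "n + 2 = d * c' + d" using c c' by simp
  then have "n = d * c' + (d - 2)" using assms(1) by simp
  then show ?thesis using cd c' by simp
qed

lemma qfact_1: "qfact 1 = 1"
  by (simp add: qfact_def qint_def)

lemma qfact_Suc0 [simp]: "qfact (Suc 0) = 1"
  by (simp add: qfact_def qint_def)

lemma canc: "(f::complex) \<noteq> 0 \<Longrightarrow> a / (f * b) * (f / c) = a / (b * c)"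
  by (cases "b = 0"; cases "c = 0") (simp_all add: field_simps)

theorem lemma2p1:
  fixes n d :: nat and mu :: "nat \<Rightarrow> nat" and z :: complex
  assumes hn: "n = (\<Sum>i=1..n. i * mu i)"
    and hn1: "n \<ge> 1"
    and hd: "d > 0" and hdvd: "d dvd (n + 2)"
    and hz: "primitive_root d z"
  shows
    "((\<exists>j\<in>{1..n}. mu j mod d = 1 mod d \<and> (\<forall>i\<in>{1..n}. i \<noteq> j \<longrightarrow> mu i mod d = 0)) \<longrightarrow>
        a_mu n mu z =
          of_nat (((n + 2) div d + (kval n mu - 1) div d - 1) choose ((kval n mu - 1) div d))
          * multinom ((kval n mu - 1) div d) n (\<lambda>i. mu i div d))
   \<and> ((d = 2 \<and> (\<forall>i\<in>{1..n}. even (mu i))) \<longrightarrow>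
        a_mu n mu z =
          of_nat (((n + kval n mu) div 2) choose (kval n mu div 2))
          * multinom (kval n mu div 2) n (\<lambda>i. mu i div 2))
   \<and> ((\<not> (\<exists>j\<in>{1..n}. mu j mod d = 1 mod d \<and> (\<forall>i\<in>{1..n}. i \<noteq> j \<longrightarrow> mu i mod d = 0))
        \<and> \<not> (d = 2 \<and> (\<forall>i\<in>{1..n}. even (mu i)))) \<longrightarrow>
        a_mu n mu z = 0)"
proof -
  define k where "k = kval n mu"
  have kdef: "k = (\<Sum>i=1..n. mu i)" unfolding k_def kval_def ..
  define P1 where "P1 = qbinom (n + k) k"
  define P2 where "P2 = qmultinom k n mu"
  have aeq: "a_mu n mu z = poly P1 z * poly P2 z / poly (qint (n + 1)) z"
    unfolding a_mu_def P1_def P2_def k_def by simp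
  have PQ1: "P1 * (qfact k * qfact n) = qfact (n + k)"
    unfolding P1_def using qbinom_mult[of k "n + k"] by simp
  have PQ2: "P2 * (\<Prod>i=1..n. qfact (mu i)) = qfact k"
    unfolding P2_def by (rule qmultinom_mult[OF kdef])
  have "\<forall>m. \<exists>R. qfact m = qint d ^ (m div d) * R \<and> poly R z = redv d z m"
    using decomp[OF hz hd] by blast
  then have "\<exists>Rf. \<forall>m. qfact m = qint d ^ (m div d) * Rf m \<and> poly (Rf m) z = redv d z m"
    by (rule choice)
  then obtain Rf where Rf: "\<forall>m. qfact m = qint d ^ (m div d) * Rf m \<and> poly (Rf m) z = redv d z m"
    by blast
  have Rf1: "\<And>m. qfact m = qint d ^ (m div d) * Rf m" and Rf2: "\<And>m. poly (Rf m) z = redv d z m"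
    using Rf by auto
  have Q1: "qfact k * qfact n = qint d ^ (k div d + n div d) * (Rf k * Rf n)"
    by (simp only: Rf1[of k] Rf1[of n] power_add mult_ac)
  define SQ where "SQ = (\<Sum>i=1..n. mu i div d)"
  define SR where "SR = (\<Sum>i=1..n. mu i mod d)"
  have Q2: "(\<Prod>i=1..n. qfact (mu i)) = qint d ^ SQ * (\<Prod>i=1..n. Rf (mu i))"
    unfolding SQ_def power_sum prod.distrib[symmetric] using Rf1 by simp
  have ksplit: "k = d * SQ + SR"
    unfolding kdef SQ_def SR_def sum_distrib_left sum.distrib[symmetric] by simp
  have kdiv: "k div d = SQ + SR div d" using ksplit hd by simp
  have kmod: "k mod d = SR mod d" using ksplit hd by simp
  have e1: "k div d + n div d \<le> (n + k) div d"
    using div_add1_eq[of n k d] by simp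
  have alt1: "d \<ge> 2 \<or> k div d + n div d = (n + k) div d" by (cases "d = 1") (use hd in auto)
  have alt2: "d \<ge> 2 \<or> SQ = k div d" using kdiv hd by (cases "d = 1") (auto simp: SR_def)
  have nzR1: "poly (Rf k * Rf n) z \<noteq> 0" using Rf2 redv_nz[OF hz hd] by simp
  have nzR2: "poly (\<Prod>i=1..n. Rf (mu i)) z \<noteq> 0" using Rf2 redv_nz[OF hz hd] by (simp add: poly_prod)
  have V1: "poly P1 z = (if k div d + n div d = (n + k) div d
      then redv d z (n + k) / (redv d z k * redv d z n) else 0)"
    using eval_quot[OF hz hd PQ1 Q1 nzR1 e1 alt1] Rf2 by simp
  have V2: "poly P2 z = (if SQ = k div d then redv d z k / (\<Prod>i=1..n. redv d z (mu i)) else 0)"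
    using eval_quot[OF hz hd PQ2 Q2 nzR2 _ alt2] kdiv Rf2 by (simp add: poly_prod)
  define A where "A = (\<exists>j\<in>{1..n}. mu j mod d = 1 mod d \<and> (\<forall>i\<in>{1..n}. i \<noteq> j \<longrightarrow> mu i mod d = 0))"
  define B where "B = (d = 2 \<and> (\<forall>i\<in>{1..n}. even (mu i)))"
  have kk: "kval n mu = k" by (simp add: k_def)
  have kpos: "k \<ge> 1"
  proof (rule ccontr)
    assume "\<not> k \<ge> 1"
    then have "k = 0" by simp
    then have "\<forall>i\<in>{1..n}. mu i = 0" using kdef by simp
    then have "(\<Sum>i=1..n. i * mu i) = 0" by simp
    then show False using hn hn1 by simp
  qed
  have partA: "A \<Longrightarrow> a_mu n mu z = of_nat (((n + 2) div d + (k - 1) div d - 1) choose ((k - 1) div d))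
      * multinom ((k - 1) div d) n (\<lambda>i. mu i div d)"
  proof -
    assume A
    then obtain j where j: "j \<in> {1..n}" "mu j mod d = 1 mod d"
        and oth: "\<forall>i\<in>{1..n}. i \<noteq> j \<longrightarrow> mu i mod d = 0"
      unfolding A_def by blast
    show ?thesis
    proof (cases "d = 1")
      case True
      have z1: "z = 1" using hz True unfolding primitive_root_def by simp
      have rv: "\<And>m. redv d z m = fact m" using True by (simp add: redv_def)
      have SQk: "SQ = k" unfolding SQ_def kdef True by simp
      have p1: "poly P1 z = fact (n + k) / (fact k * fact n)"
        using V1 True rv by simp
      have p2: "poly P2 z = fact k / (\<Prod>i=1..n. fact (mu i))"
        using V2 True rv SQk by simp
      have G: "poly (qint (n + 1)) z = of_nat (n + 1)"
        unfolding z1 poly_qint by simp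
      obtain k' where k': "k = Suc k'" using kpos by (cases k) auto
      have bin: "(of_nat ((n + k) choose k') :: complex) = fact (n + k) / (fact k' * fact (Suc n))"
        using binomial_fact[of k' "n + k"] k' by simp
      have e2: "(k - 1) div d = k'" using True k' by simp
      have e: "(n + 2) div d + k' - 1 = n + k" using True k' by simp
      define PI where "PI = (\<Prod>i=1..n. fact (mu i) :: complex)"
      have PI: "PI \<noteq> 0" unfolding PI_def by simp
      have mn: "multinom k' n (\<lambda>i. mu i div d) = fact k' / PI"
        unfolding multinom_def PI_def using True by simp
      have fk: "(fact k :: complex) \<noteq> 0" "(fact k' :: complex) \<noteq> 0" "(fact n :: complex) \<noteq> 0" by auto
      have m0: "(of_nat (n + 1) :: complex) \<noteq> 0" by (simp del: of_nat_Suc add: of_nat_eq_0_iff)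
      have fs: "(fact (Suc n) :: complex) = of_nat (n + 1) * fact n" by (simp add: fact_Suc)
      have "a_mu n mu z = fact (n + k) / (fact k * fact n) * (fact k / PI) / of_nat (n + 1)"
        unfolding aeq p1 p2 G PI_def ..
      also have "\<dots> = fact (n + k) / (of_nat (n + 1) * fact n * PI)"
        using fk m0 PI by (simp add: field_simps)
      also have "\<dots> = fact (n + k) / (fact k' * fact (Suc n)) * (fact k' / PI)"
      proof -
        have "fact (n + k) / (fact k' * fact (Suc n)) * (fact k' / PI) = fact (n + k) / (fact (Suc n) * PI)"
          by (rule canc[OF fk(2)])
        also have "\<dots> = fact (n + k) / (of_nat (n + 1) * fact n * PI)" by (simp only: fs)
        finally show ?thesis by (rule sym)
      qed
      finally show ?thesis
        unfolding e2 e bin mn .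
    next
      case False
      then have d2: "d \<ge> 2" using hd by simp
      have rj: "mu j mod d = 1" using j(2) d2 by simp
      have SR1: "SR = 1"
      proof -
        have "SR = mu j mod d + (\<Sum>i\<in>{1..n} - {j}. mu i mod d)"
          unfolding SR_def using j(1) by (simp add: sum.remove)
        also have "(\<Sum>i\<in>{1..n} - {j}. mu i mod d) = 0" using oth by simp
        finally show ?thesis using rj by simp
      qed
      define K where "K = SQ"
      define N where "N = n div d"
      have nf: "n = d * ((n + 2) div d - 1) + (d - 2)" using nform[OF d2 hdvd] .
      define X where "X = (n + 2) div d - 1"
      have nf': "n = d * X + (d - 2)" using nf unfolding X_def .
      have dd: "(d - 2) div d = 0" "(d - 2) mod d = d - 2" "(d - 1) div d = 0" "(d - 1) mod d = d - 1"
        using d2 by auto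
      have nd: "N = X"
      proof -
        have "n div d = (d - 2 + d * X) div d" using nf' by (simp only: add.commute)
        also have "\<dots> = X + (d - 2) div d" using hd by simp
        finally show ?thesis unfolding N_def using dd by simp
      qed
      have nm: "n mod d = d - 2"
      proof -
        have "n mod d = (d - 2 + d * X) mod d" using nf' by (simp only: add.commute)
        also have "\<dots> = (d - 2) mod d" by (rule mod_mult_self2)
        finally show ?thesis using dd by simp
      qed
      have kK: "k = d * K + 1" using ksplit SR1 unfolding K_def by (simp only:)
      have nk: "n + k = (d - 1) + d * (N + K)"
      proof -
        have "d * (N + K) = d * N + d * K" by (simp only: distrib_left)
        moreover have "d * N = d * X" using nd by (simp only:)
        ultimately show ?thesis using nf' kK d2 by linarith
      qed
      have nkd: "(n + k) div d = N + K" and nkm: "(n + k) mod d = d - 1"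
      proof -
        have "(n + k) div d = (N + K) + (d - 1) div d" unfolding nk using hd by (intro div_mult_self2) simp
        then show "(n + k) div d = N + K" using dd by simp
        have "(n + k) mod d = (d - 1) mod d" unfolding nk by (rule mod_mult_self2)
        then show "(n + k) mod d = d - 1" using dd by simp
      qed
      have kd: "k div d = K" and km: "k mod d = 1" using kdiv kmod SR1 d2 unfolding K_def by auto
      have k1: "(k - 1) div d = K" using kK hd by simp
      have n1: "(n + 1) mod d = d - 1"
      proof -
        have "n + 1 = (d - 1) + d * X" using nf' d2 by linarith
        then have "(n + 1) mod d = (d - 1) mod d" by (simp only: mod_mult_self2)
        then show ?thesis using dd by simp
      qed
      define C where "C = poly (qfact (d - 1)) z"
      define F2 where "F2 = poly (qfact (d - 2)) z"
      define G where "G = poly (qint (d - 1)) z"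
      have CFG: "C = F2 * G"
      proof -
        have "d - 1 = Suc (d - 2)" using d2 by simp
        then show ?thesis unfolding C_def F2_def G_def by (simp add: qfact_Suc)
      qed
      have Cnz: "C \<noteq> 0" unfolding C_def using poly_qfact_nz[OF hz] d2 by simp
      then have F2nz: "F2 \<noteq> 0" and Gnz: "G \<noteq> 0" using CFG by auto
      have Gq: "poly (qint (n + 1)) z = G"
        unfolding G_def using poly_qint_mod[OF hz d2, of "n + 1"] n1 by simp
      have rk: "redv d z k = fact K * C ^ K"
        using kd km unfolding redv_def C_def by (simp add: qfact_1)
      have rn: "redv d z n = fact N * C ^ N * F2"
        using nm unfolding redv_def C_def F2_def N_def by simp
      have rnk: "redv d z (n + k) = fact (N + K) * C ^ (N + K) * C"
        using nkd nkm unfolding redv_def C_def by simp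
      have rmu: "\<And>i. i \<in> {1..n} \<Longrightarrow> redv d z (mu i) = fact (mu i div d) * C ^ (mu i div d)"
      proof -
        fix i assume i: "i \<in> {1..n}"
        have "mu i mod d = 0 \<or> mu i mod d = 1" using oth rj i by (cases "i = j") auto
        then have "poly (qfact (mu i mod d)) z = 1" using qfact_1 by auto
        then show "redv d z (mu i) = fact (mu i div d) * C ^ (mu i div d)"
          unfolding redv_def C_def by simp
      qed
      have pr: "(\<Prod>i=1..n. redv d z (mu i)) = (\<Prod>i=1..n. fact (mu i div d)) * C ^ K"
      proof -
        have "(\<Prod>i=1..n. redv d z (mu i)) = (\<Prod>i=1..n. fact (mu i div d) * C ^ (mu i div d))"
          using rmu by (rule prod.cong[OF refl])
        also have "\<dots> = (\<Prod>i=1..n. fact (mu i div d)) * C ^ K"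
          unfolding prod.distrib K_def SQ_def power_sum ..
        finally show ?thesis .
      qed
      have p1: "poly P1 z = fact (N + K) * C ^ (N + K) * C / (fact K * C ^ K * (fact N * C ^ N * F2))"
        using V1 nkd kd rk rn rnk unfolding N_def by simp
      have p2: "poly P2 z = fact K * C ^ K / ((\<Prod>i=1..n. fact (mu i div d)) * C ^ K)"
        using V2 kd rk pr unfolding K_def by simp
      have bin: "(of_nat ((N + K) choose K) :: complex) = fact (N + K) / (fact K * fact N)"
        using binomial_fact[of K "N + K"] by simp
      have e: "(n + 2) div d + K - 1 = N + K"
      proof -
        have "(n + 2) div d \<ge> 1"
        proof (rule ccontr)
          assume "\<not> (n + 2) div d \<ge> 1"
          then have "(n + 2) div d = 0" by simp
          then have "n + 2 < d" using hd by (simp add: div_eq_0_iff)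
          then show False using hdvd by (simp add: nat_dvd_not_less)
        qed
        then show ?thesis using nd unfolding X_def by simp
      qed
      have PI: "(\<Prod>i=1..n. fact (mu i div d) :: complex) \<noteq> 0" by simp
      show ?thesis
        unfolding aeq p1 p2 Gq k1 e bin multinom_def using PI Cnz F2nz Gnz
        by (simp add: CFG power_add field_simps)
    qed
  qed
  have partB: "B \<Longrightarrow> a_mu n mu z = of_nat (((n + k) div 2) choose (k div 2))
      * multinom (k div 2) n (\<lambda>i. mu i div 2)"
  proof -
    assume B
    then have d2: "d = 2" and ev: "\<forall>i\<in>{1..n}. even (mu i)" unfolding B_def by auto
    have r0: "\<forall>i\<in>{1..n}. mu i mod d = 0" using ev d2 by auto
    have SR0: "SR = 0" unfolding SR_def using r0 by simp
    have kd: "k div 2 = SQ" and km: "k mod 2 = 0" using kdiv kmod SR0 d2 by auto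
    have nm: "n mod 2 = 0" using hdvd d2 by auto
    define N where "N = n div 2"
    define K where "K = k div 2"
    have nkd: "(n + k) div 2 = N + K" and nkm: "(n + k) mod 2 = 0"
      using nm km unfolding N_def K_def by auto
    have rv: "\<And>m. m mod 2 = 0 \<Longrightarrow> redv d z m = fact (m div 2)"
      using d2 qfact_1 by (simp add: redv_def)
    have n1: "(n + 1) mod 2 = 1" using nm by presburger
    have G: "poly (qint (n + 1)) z = 1"
      using poly_qint_mod[OF hz, of "n + 1"] d2 n1 by (simp del: add_Suc_right One_nat_def add.commute)
    have p1: "poly P1 z = fact (N + K) / (fact K * fact N)"
      using V1 nkd nkm rv[OF nkm] rv[OF km] rv[OF nm] d2 unfolding N_def K_def by simp
    have pr: "(\<Prod>i=1..n. redv d z (mu i)) = (\<Prod>i=1..n. fact (mu i div 2))"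
      using rv r0 d2 by (intro prod.cong) auto
    have p2: "poly P2 z = fact K / (\<Prod>i=1..n. fact (mu i div 2))"
      using V2 kd rv[OF km] pr d2 unfolding K_def by simp
    have bin: "(of_nat ((N + K) choose K) :: complex) = fact (N + K) / (fact K * fact N)"
      using binomial_fact[of K "N + K"] by simp
    show ?thesis
      unfolding aeq G p1 p2 nkd K_def[symmetric] bin multinom_def by simp
  qed
  have partC: "\<not> A \<Longrightarrow> \<not> B \<Longrightarrow> a_mu n mu z = 0"
  proof -
    assume nA: "\<not> A" and nB: "\<not> B"
    have d2: "d \<ge> 2"
    proof (rule ccontr)
      assume "\<not> d \<ge> 2"
      then have "d = 1" using hd by simp
      then have A unfolding A_def using hn1 by (auto intro!: bexI[of _ 1])
      then show False using nA by simp
    qed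
    have nf: "n = d * ((n + 2) div d - 1) + (d - 2)" using nform[OF d2 hdvd] .
    have nmod: "n mod d = d - 2"
    proof -
      have "n mod d = ((d - 2) + d * ((n + 2) div d - 1)) mod d" using nf by (metis add.commute)
      also have "\<dots> = (d - 2) mod d" by (rule mod_mult_self2)
      also have "\<dots> = d - 2" using d2 by simp
      finally show ?thesis .
    qed
    show "a_mu n mu z = 0"
    proof (rule ccontr)
      assume nz: "a_mu n mu z \<noteq> 0"
      then have nz1: "poly P1 z \<noteq> 0" and nz2: "poly P2 z \<noteq> 0" using aeq by auto
      then have c2: "SQ = k div d" using V2 by (auto split: if_splits)
      then have "SR div d = 0" using kdiv by simp
      then have SRd: "SR < d" using hd by (simp add: div_eq_0_iff)
      then have kmod': "k mod d = SR" using kmod by simp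
      have c1: "k div d + n div d = (n + k) div d" using nz1 V1 by (auto split: if_splits)
      then have "(n mod d + k mod d) div d = 0" using div_add1_eq[of n k d] by simp
      then have "n mod d + k mod d < d" using hd by (simp add: div_eq_0_iff)
      then have SR2: "SR < 2" using nmod kmod' d2 by simp
      show False
      proof (cases "SR = 0")
        case True
        then have r0: "\<forall>i\<in>{1..n}. mu i mod d = 0" unfolding SR_def by simp
        have "d dvd (\<Sum>i=1..n. i * mu i)"
        proof (rule dvd_sum)
          fix i assume "i \<in> {1..n}"
          then have "d dvd mu i" using r0 by auto
          then show "d dvd i * mu i" by simp
        qed
        then have "n mod d = 0" using hn by simp
        then have "d = 2" using nmod d2 by simp
        moreover have "\<forall>i\<in>{1..n}. even (mu i)" using r0 \<open>d = 2\<close> by auto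
        ultimately have B unfolding B_def by simp
        then show False using nB by simp
      next
        case False
        then have "SR = 1" using SR2 by simp
        then obtain j where j: "j \<in> {1..n}" "mu j mod d = 1" "\<forall>i\<in>{1..n}. i \<noteq> j \<longrightarrow> mu i mod d = 0"
          using sum_eq_one_nat[of "{1..n}" "\<lambda>i. mu i mod d"] unfolding SR_def by auto
        then have A unfolding A_def using d2 by auto
        then show False using nA by simp
      qed
    qed
  qed
  show ?thesis unfolding kk using partA partB partC unfolding A_def B_def by blast
qed

end
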